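(* Let $A\in\mathbb{R}^{n\times n}$, $B\in\mathbb{R}^{n\times k}$, $C\in\mathbb{R}^{m\times n}$, and let $\mathcal{V}^*(C)$ be the maximal $(A,B)$-invariant subspace contained in $\operatorname{Ker}C$. Suppose one of the following holds: (1) $n-m\ge k$, $\operatorname{Im}B\subseteq\operatorname{Ker}C$, and $CAv\neq0$ for every nonzero $v\in\operatorname{Ker}C$; (2) $n-m<k$, $\operatorname{Ker}C\subseteq\operatorname{Im}B$, and there is a matrix $Z$ with $ZB=0$ such that $ZAv\neq0$ for every nonzero $v\in\operatorname{Ker}C$. Then $\dim\mathcal{V}^*(C)=0$, and, in the asynchronous dynamic game described in the context, if the attacker's choice in an odd epoch $l$ is $C_l=C$, the game is in lock mode from epoch $l$ on (there is $\gamma$ with $\Phi_i=\gamma$ for all $i\ge l$).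
   Context: A subspace $\mathcal{V}$ is $(A,B)$-invariant if $(A+BF)\mathcal{V}\subseteq\mathcal{V}$ for some $F\in\mathbb{R}^{k\times n}$ (a friend of $\mathcal{V}$). For $C\in\mathbb{R}^{m\times n}$, $F\in\mathbb{R}^{k\times n}$ let $\Omega(C,F)=[C;\,C(A+BF);\,\dots;\,C(A+BF)^{n-1}]$. Best responses: $BR1_a(F)=\arg\min_{C}\dim\operatorname{Ker}\Omega(C,F)$; $BR1_d(C)=\arg\max_{F}\dim\operatorname{Ker}\Omega(C,F)$; $BR2_a(F)=\arg\min_{C\in BR1_a(F)}\dim\mathcal{V}^*(C)$; $BR2_d(C)=\arg\max_{F\in BR1_d(C)}\min_{C'}\dim\operatorname{Ker}\Omega(C',F)$. The game: an initial $F_0$ is given; in each odd epoch $i$ the attacker chooses $C_i\in BR2_a(F_{i-1})$ (keeping $C_i=C_{i-2}$ whenever $C_{i-2}\in BR2_a(F_{i-1})$), $F_i=F_{i-1}$, and $\Phi_i=\min_{C}\dim\operatorname{Ker}\Omega(C,F_{i-1})$; in each even epoch $i$ the defender chooses $F_i\in BR2_d(C_{i-1})$ (keeping $F_i=F_{i-2}$ whenever $F_{i-2}\in BR2_d(C_{i-1})$), $C_i=C_{i-1}$, and $\Phi_i=\max_{F}\dim\operatorname{Ker}\Omega(C_{i-1},F)$. *)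

theory Defs
  imports "HOL-Analysis.Analysis"
begin

text \<open>Matrices are HOL-Analysis matrices: an m x n real matrix is real^'n^'m,
  so A :: real^'n^'n, B :: real^'k^'n, C :: real^'n^'m, F :: real^'n^'k.\<close>

fun mpow :: "real^'n^'n \<Rightarrow> nat \<Rightarrow> real^'n^'n" where
  "mpow M 0 = mat 1"
| "mpow M (Suc j) = M ** mpow M j"

definition kerm :: "real^'n^'m \<Rightarrow> (real^'n) set" where
  "kerm M = {x. M *v x = 0}"

definition imm :: "real^'k^'n \<Rightarrow> (real^'n) set" where
  "imm M = range (\<lambda>u. M *v u)"

text \<open>Kernel of Omega(C,F) = [C; C(A+BF); ...; C(A+BF)^(n-1)] (stacked matrix):
  a vector is in the kernel iff every block annihilates it.\<close>
definition KerOmega :: "real^'n^'n \<Rightarrow> real^'k^'n \<Rightarrow> real^'n^'m \<Rightarrow> real^'n^'k \<Rightarrow> (real^'n) set" where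
  "KerOmega A B C F = {x. \<forall>j<CARD('n). (C ** mpow (A + B ** F) j) *v x = 0}"

definition dKO :: "real^'n^'n \<Rightarrow> real^'k^'n \<Rightarrow> real^'n^'m \<Rightarrow> real^'n^'k \<Rightarrow> nat" where
  "dKO A B C F = dim (KerOmega A B C F)"

definition ABinv :: "real^'n^'n \<Rightarrow> real^'k^'n \<Rightarrow> (real^'n) set \<Rightarrow> bool" where
  "ABinv A B V \<longleftrightarrow> subspace V \<and> (\<exists>F::real^'n^'k. \<forall>v\<in>V. (A + B ** F) *v v \<in> V)"

definition Vstar :: "real^'n^'n \<Rightarrow> real^'k^'n \<Rightarrow> real^'n^'m \<Rightarrow> (real^'n) set" where
  "Vstar A B C = (GREATEST V. ABinv A B V \<and> V \<subseteq> kerm C)"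

definition minKO :: "real^'n^'n \<Rightarrow> real^'k^'n \<Rightarrow> real^'n^'k \<Rightarrow> ('m::finite) itself \<Rightarrow> nat" where
  "minKO A B F _ = (INF C::real^'n^'m. dKO A B C F)"

definition maxKO :: "real^'n^'n \<Rightarrow> real^'k^'n \<Rightarrow> real^'n^'m \<Rightarrow> nat" where
  "maxKO A B C = (SUP F::real^'n^'k. dKO A B C F)"

definition BR1a :: "real^'n^'n \<Rightarrow> real^'k^'n \<Rightarrow> real^'n^'k \<Rightarrow> (real^'n^'m) set" where
  "BR1a A B F = {C. \<forall>C'::real^'n^'m. dKO A B C F \<le> dKO A B C' F}"

definition BR1d :: "real^'n^'n \<Rightarrow> real^'k^'n \<Rightarrow> real^'n^'m \<Rightarrow> (real^'n^'k) set" where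
  "BR1d A B C = {F. \<forall>F'. dKO A B C F' \<le> dKO A B C F}"

definition BR2a :: "real^'n^'n \<Rightarrow> real^'k^'n \<Rightarrow> real^'n^'k \<Rightarrow> (real^'n^'m) set" where
  "BR2a A B F = {C \<in> BR1a A B F. \<forall>C'::real^'n^'m\<in>BR1a A B F. dim (Vstar A B C) \<le> dim (Vstar A B C')}"

definition BR2d :: "real^'n^'n \<Rightarrow> real^'k^'n \<Rightarrow> real^'n^'m \<Rightarrow> (real^'n^'k) set" where
  "BR2d A B C = {F \<in> BR1d A B C.
      \<forall>F'\<in>BR1d A B C. minKO A B F' TYPE('m) \<le> minKO A B F TYPE('m)}"

text \<open>The asynchronous game, epochs i = 1,2,...; Fs 0 is the initial F_0.
  Cs i, Fs i, Phi i are C_i, F_i, Phi_i (Cs 0 is irrelevant).\<close>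
definition game :: "real^'n^'n \<Rightarrow> real^'k^'n \<Rightarrow> (nat \<Rightarrow> real^'n^'m) \<Rightarrow> (nat \<Rightarrow> real^'n^'k)
    \<Rightarrow> (nat \<Rightarrow> nat) \<Rightarrow> bool" where
  "game A B Cs Fs Phi \<longleftrightarrow>
     (\<forall>i. odd i \<longrightarrow>
        Cs i \<in> BR2a A B (Fs (i - 1))
      \<and> (i \<ge> 3 \<and> Cs (i - 2) \<in> BR2a A B (Fs (i - 1)) \<longrightarrow> Cs i = Cs (i - 2))
      \<and> Fs i = Fs (i - 1)
      \<and> Phi i = minKO A B (Fs (i - 1)) TYPE('m))
   \<and> (\<forall>i. even i \<and> i \<ge> 2 \<longrightarrow>
        Fs i \<in> BR2d A B (Cs (i - 1))
      \<and> (Fs (i - 2) \<in> BR2d A B (Cs (i - 1)) \<longrightarrow> Fs i = Fs (i - 2))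
      \<and> Cs i = Cs (i - 1)
      \<and> Phi i = maxKO A B (Cs (i - 1)))"

definition lock_mode_from :: "(nat \<Rightarrow> nat) \<Rightarrow> nat \<Rightarrow> bool" where
  "lock_mode_from Phi l \<longleftrightarrow> (\<exists>\<gamma>. \<forall>i\<ge>l. Phi i = \<gamma>)"

end

theory Submission
  imports Defs
begin

lemma dim_le0: "(S::(real^'n) set) \<subseteq> {0} \<Longrightarrow> dim S = 0"
  using dim_subset[of S "{0}"] by simp

lemma split_mv: "(A + B ** F) *v v = A *v v + B *v (F *v v)"
  by (simp add: matrix_vector_mult_add_rdistrib matrix_vector_mul_assoc)

lemma core:
  fixes A :: "real^'n^'n" and B :: "real^'k^'n" and C :: "real^'n^'m" and F :: "real^'n^'k"
  assumes H: "(CARD('m) + CARD('k) \<le> CARD('n)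
             \<and> imm B \<subseteq> kerm C
             \<and> (\<forall>v\<in>kerm C. v \<noteq> 0 \<longrightarrow> C *v (A *v v) \<noteq> 0))
         \<or> (CARD('n) < CARD('m) + CARD('k)
             \<and> kerm C \<subseteq> imm B
             \<and> (\<exists>Z::real^'n^'p. Z ** B = 0 \<and> (\<forall>v\<in>kerm C. v \<noteq> 0 \<longrightarrow> Z *v (A *v v) \<noteq> 0)))"
    and v1: "C *v v = 0" and v2: "C *v ((A + B ** F) *v v) = 0"
  shows "v = 0"
  using H
proof
  assume h: "CARD('m) + CARD('k) \<le> CARD('n)
             \<and> imm B \<subseteq> kerm C
             \<and> (\<forall>v\<in>kerm C. v \<noteq> 0 \<longrightarrow> C *v (A *v v) \<noteq> 0)"
  have "B *v (F *v v) \<in> imm B" unfolding imm_def by auto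
  with h have "C *v (B *v (F *v v)) = 0" unfolding kerm_def by auto
  with v2 have "C *v (A *v v) = 0"
    by (simp add: split_mv matrix_vector_right_distrib)
  with h v1 show "v = 0" unfolding kerm_def by auto
next
  assume h: "CARD('n) < CARD('m) + CARD('k)
             \<and> kerm C \<subseteq> imm B
             \<and> (\<exists>Z::real^'n^'p. Z ** B = 0 \<and> (\<forall>v\<in>kerm C. v \<noteq> 0 \<longrightarrow> Z *v (A *v v) \<noteq> 0))"
  then obtain Z :: "real^'n^'p" where Z: "Z ** B = 0" "\<forall>v\<in>kerm C. v \<noteq> 0 \<longrightarrow> Z *v (A *v v) \<noteq> 0"
    by blast
  have "(A + B ** F) *v v \<in> imm B" using h v2 unfolding kerm_def by auto
  then obtain u where u: "(A + B ** F) *v v = B *v u" unfolding imm_def by auto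
  have ZB: "Z *v (B *v w) = 0" for w
    by (simp add: matrix_vector_mul_assoc Z(1))
  have "Z *v ((A + B ** F) *v v) = 0" using u ZB by simp
  hence "Z *v (A *v v) = 0"
    by (simp add: split_mv matrix_vector_right_distrib ZB)
  with Z(2) v1 show "v = 0" unfolding kerm_def by auto
qed

lemma ko_zero:
  fixes A :: "real^'n^'n" and B :: "real^'k^'n" and C :: "real^'n^'m" and F :: "real^'n^'k"
  assumes H: "(CARD('m) + CARD('k) \<le> CARD('n)
             \<and> imm B \<subseteq> kerm C
             \<and> (\<forall>v\<in>kerm C. v \<noteq> 0 \<longrightarrow> C *v (A *v v) \<noteq> 0))
         \<or> (CARD('n) < CARD('m) + CARD('k)
             \<and> kerm C \<subseteq> imm B
             \<and> (\<exists>Z::real^'n^'p. Z ** B = 0 \<and> (\<forall>v\<in>kerm C. v \<noteq> 0 \<longrightarrow> Z *v (A *v v) \<noteq> 0)))"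
  shows "dKO A B C F = 0"
proof -
  have "KerOmega A B C F \<subseteq> {0}"
  proof
    fix v assume "v \<in> KerOmega A B C F"
    hence kv: "\<forall>j<CARD('n). (C ** mpow (A + B ** F) j) *v v = 0" unfolding KerOmega_def by auto
    have v1: "C *v v = 0" using kv[rule_format, of 0] by simp
    show "v \<in> {0}"
    proof (cases "CARD('n) \<ge> 2")
      case True
      have "(C ** mpow (A + B ** F) 1) *v v = 0" using kv[rule_format, of 1] True by simp
      hence "C *v ((A + B ** F) *v v) = 0" by (simp add: matrix_vector_mul_assoc)
      from core[OF H v1 this] show ?thesis by simp
    next
      case False
      moreover have "CARD('n) > 0" by (rule finite_UNIV_card_ge_0) simp
      ultimately have "CARD('n) = 1" by linarith
      then obtain a where a: "(UNIV :: 'n set) = {a}" by (metis card_1_singletonE)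
      show ?thesis
      proof (rule ccontr)
        assume "v \<notin> {0}"
        hence va: "v $ a \<noteq> 0" using a by (auto simp: vec_eq_iff)
        define w where "w = (A + B ** F) *v v"
        have "w = (w $ a / v $ a) *\<^sub>R v"
        proof (rule vec_eq_iff[THEN iffD2], intro allI)
          fix i :: 'n
          have "i = a" using a by auto
          thus "w $ i = ((w $ a / v $ a) *\<^sub>R v) $ i" using va by simp
        qed
        hence "C *v w = (w $ a / v $ a) *\<^sub>R (C *v v)"
          by (metis matrix_vector_mult_scaleR)
        hence "C *v ((A + B ** F) *v v) = 0" using v1 w_def by simp
        from core[OF H v1 this] \<open>v \<notin> {0}\<close> show False by simp
      qed
    qed
  qed
  thus ?thesis unfolding dKO_def by (rule dim_le0)
qed

theorem theorem2:
  fixes A :: "real^'n^'n" and B :: "real^'k^'n" and C :: "real^'n^'m"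
  assumes "(CARD('m) + CARD('k) \<le> CARD('n)
             \<and> imm B \<subseteq> kerm C
             \<and> (\<forall>v\<in>kerm C. v \<noteq> 0 \<longrightarrow> C *v (A *v v) \<noteq> 0))
         \<or> (CARD('n) < CARD('m) + CARD('k)
             \<and> kerm C \<subseteq> imm B
             \<and> (\<exists>Z::real^'n^'p. Z ** B = 0 \<and> (\<forall>v\<in>kerm C. v \<noteq> 0 \<longrightarrow> Z *v (A *v v) \<noteq> 0)))"
  shows "dim (Vstar A B C) = 0
       \<and> (\<forall>(Cs :: nat \<Rightarrow> real^'n^'m) (Fs :: nat \<Rightarrow> real^'n^'k) Phi l.
            game A B Cs Fs Phi \<and> odd l \<and> Cs l = C \<longrightarrow> lock_mode_from Phi l)"
proof -
  have V0: "Vstar A B C = {0}"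
    unfolding Vstar_def
  proof (rule Greatest_equality)
    show "ABinv A B {0} \<and> {0} \<subseteq> kerm C"
      unfolding ABinv_def kerm_def by (auto simp: subspace_0)
  next
    fix V assume "ABinv A B V \<and> V \<subseteq> kerm C"
    then obtain F :: "real^'n^'k" where V: "V \<subseteq> kerm C" "\<forall>v\<in>V. (A + B ** F) *v v \<in> V"
      unfolding ABinv_def by blast
    show "V \<le> {0}"
    proof
      fix v assume "v \<in> V"
      with V have "C *v v = 0" "C *v ((A + B ** F) *v v) = 0" unfolding kerm_def by auto
      from core[OF assms this] show "v \<in> {0}" by simp
    qed
  qed
  have D0: "dim (Vstar A B C) = 0" using V0 by (simp add: dim_le0)
  have K: "\<And>F. dKO A B C F = 0" using ko_zero[OF assms] by blast
  have maxK: "maxKO A B C = 0" unfolding maxKO_def K by simp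
  have minK: "minKO A B F TYPE('m) = 0" for F :: "real^'n^'k"
  proof -
    have "(INF C'::real^'n^'m. dKO A B C' F) \<le> dKO A B C F"
      by (rule cINF_lower) simp_all
    thus ?thesis unfolding minKO_def using K by simp
  qed
  have CBR: "C \<in> BR2a A B F" for F
    unfolding BR2a_def BR1a_def by (simp add: D0 K)
  have "\<forall>(Cs :: nat \<Rightarrow> real^'n^'m) (Fs :: nat \<Rightarrow> real^'n^'k) Phi l.
            game A B Cs Fs Phi \<and> odd l \<and> Cs l = C \<longrightarrow> lock_mode_from Phi l"
  proof (intro allI impI)
    fix Cs :: "nat \<Rightarrow> real^'n^'m" and Fs :: "nat \<Rightarrow> real^'n^'k" and Phi l
    assume a: "game A B Cs Fs Phi \<and> odd l \<and> Cs l = C"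
    have g1: "\<And>i. odd i \<Longrightarrow> i \<ge> 3 \<Longrightarrow> Cs (i - 2) \<in> BR2a A B (Fs (i - 1)) \<Longrightarrow> Cs i = Cs (i - 2)"
      using a unfolding game_def by blast
    have g1': "\<And>i. odd i \<Longrightarrow> Phi i = minKO A B (Fs (i - 1)) TYPE('m)"
      using a unfolding game_def by blast
    have g2: "\<And>i. even i \<Longrightarrow> i \<ge> 2 \<Longrightarrow> Phi i = maxKO A B (Cs (i - 1))"
      using a unfolding game_def by blast
    obtain j where lj: "l = Suc (2 * j)" using a by (metis oddE Suc_eq_plus1)
    have CsC: "Cs (l + 2 * d) = C" for d
    proof (induction d)
      case 0 then show ?case using a by simp
    next
      case (Suc d)
      have o: "odd (l + 2 * Suc d)" using lj by simp
      have t: "l + 2 * Suc d \<ge> 3" using lj by simp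
      have e: "l + 2 * Suc d - 2 = l + 2 * d" by simp
      have "Cs (l + 2 * Suc d - 2) \<in> BR2a A B (Fs (l + 2 * Suc d - 1))"
        unfolding e Suc.IH by (rule CBR)
      from g1[OF o t this] show ?case unfolding e Suc.IH .
    qed
    have "\<forall>i\<ge>l. Phi i = 0"
    proof (intro allI impI)
      fix i assume il: "l \<le> i"
      show "Phi i = 0"
      proof (cases "odd i")
        case True then show ?thesis using g1' minK by simp
      next
        case False
        obtain q where iq: "i = 2 * q" using False by blast
        have i2: "i \<ge> 2" using il lj iq by simp
        have "i - 1 = l + 2 * (q - j - 1)" using lj iq il by simp
        hence "Cs (i - 1) = C" using CsC by metis
        then show ?thesis using g2[of i] False i2 maxK by simp
      qed
    qed
    thus "lock_mode_from Phi l" unfolding lock_mode_from_def by blast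
  qed
  with D0 show ?thesis by blast
qed

end
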